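(* Let $p$ be a prime with $p\equiv\pm1\pmod{10}$ and $n$ an integer such that $\mathcal{S}_{p,n}:=p^2 16^n+1$ is prime. Let $E$ be the elliptic curve $y^2=x^3-x$ and $E_{30}$ the elliptic curve $30y^2=x^3-x$. Then $E_{30}(\mathbb{F}_{\mathcal{S}_{p,n}})\cong E(\mathbb{F}_{\mathcal{S}_{p,n}})$ (indeed $30$ is a square modulo $\mathcal{S}_{p,n}$, so $E_{30}\cong E$ over $\mathbb{F}_{\mathcal{S}_{p,n}}$). *)

theory Defs
  imports "HOL-Algebra.Group" "HOL-Computational_Algebra.Primes" "HOL-Library.Cardinality"
begin

text \<open>Points of the (generalised short Weierstrass) curve  c*y^2 = x^3 + a*x + b  over a field,
  with None the point at infinity.\<close>

definition ell_points :: "'a::field \<Rightarrow> 'a \<Rightarrow> 'a \<Rightarrow> ('a \<times> 'a) option set" where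
  "ell_points c a b = {P. case P of None \<Rightarrow> True | Some (x, y) \<Rightarrow> c * y^2 = x^3 + a * x + b}"

text \<open>Chord-and-tangent addition on  c*y^2 = x^3 + a*x + b  (odd characteristic, c nonzero).\<close>

definition ell_add :: "'a::field \<Rightarrow> 'a \<Rightarrow> 'a \<Rightarrow> ('a \<times> 'a) option \<Rightarrow> ('a \<times> 'a) option \<Rightarrow> ('a \<times> 'a) option" where
  "ell_add c a b P Q =
     (case P of None \<Rightarrow> Q
      | Some (x1, y1) \<Rightarrow>
        (case Q of None \<Rightarrow> P
         | Some (x2, y2) \<Rightarrow>
             (if x1 \<noteq> x2 then
                (let l = (y2 - y1) / (x2 - x1); x3 = c * l^2 - x1 - x2
                 in Some (x3, l * (x1 - x3) - y1))
              else if y1 + y2 = 0 then None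
              else
                (let l = (3 * x1^2 + a) / (2 * c * y1); x3 = c * l^2 - 2 * x1
                 in Some (x3, l * (x1 - x3) - y1)))))"

definition ell_group :: "'a::field \<Rightarrow> 'a \<Rightarrow> 'a \<Rightarrow> ('a \<times> 'a) option monoid" where
  "ell_group c a b = \<lparr>carrier = ell_points c a b, monoid.mult = ell_add c a b, one = None\<rparr>"

end

theory Submission
  imports Defs "HOL-Number_Theory.Number_Theory"
begin

lemma sq_mod3: "(y::int)^2 mod 3 \<noteq> 2"
proof -
  have "y mod 3 \<in> {0,1,2}" by auto
  moreover have "y^2 mod 3 = (y mod 3)^2 mod 3" by (simp add: power_mod)
  ultimately show ?thesis by auto
qed

lemma sq_mod5: "(y::int)^2 mod 5 \<noteq> 2"
proof -
  have "y mod 5 \<in> {0,1,2,3,4}" by auto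
  moreover have "y^2 mod 5 = (y mod 5)^2 mod 5" by (simp add: power_mod)
  ultimately show ?thesis by auto
qed

lemma leg_cases: "Legendre a m \<in> {-1,0,1}"
  unfolding Legendre_def by auto

lemma leg_eq_from_cong:
  assumes "[Legendre a (int q) = c] (mod int q)" "c \<in> {-1,0,1}" "(q::nat) > 2"
  shows "Legendre a (int q) = c"
proof -
  have d: "int q dvd (Legendre a (int q) - c)" using assms(1) by (simp add: cong_iff_dvd_diff)
  have "\<bar>Legendre a (int q) - c\<bar> \<le> 2" using leg_cases[of a "int q"] assms(2) by auto
  have "Legendre a (int q) - c = 0"
  proof (rule ccontr)
    assume ne: "Legendre a (int q) - c \<noteq> 0"
    have "int q \<le> \<bar>Legendre a (int q) - c\<bar>" using dvd_imp_le_int[OF ne d] by simp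
    then show False using \<open>\<bar>Legendre a (int q) - c\<bar> \<le> 2\<close> assms(3) by simp
  qed
  then show ?thesis by simp
qed

lemma qmod: fixes p n k :: nat assumes a: "p^2 mod k = 1" and b: "16^n mod k = 1" and k: "k > 2"
  shows "(p^2*16^n+1) mod k = 2"
proof -
  have "(p^2*16^n) mod k = ((p^2 mod k) * (16^n mod k)) mod k" by (rule mod_mult_eq[symmetric])
  also have "\<dots> = 1" using a b k by simp
  finally have c: "(p^2*16^n) mod k = 1" .
  have "(p^2*16^n+1) mod k = ((p^2*16^n) mod k + 1) mod k" by (rule mod_add_left_eq[symmetric])
  then show ?thesis using c k by simp
qed
lemma pow16: "(16::nat)^n mod 3 = 1" "(16::nat)^n mod 5 = 1"
proof -
  have "(16::nat)^n mod 3 = (16 mod 3)^n mod 3" by (rule power_mod[symmetric])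
  then show "(16::nat)^n mod 3 = 1" by simp
  have "(16::nat)^n mod 5 = (16 mod 5)^n mod 5" by (rule power_mod[symmetric])
  then show "(16::nat)^n mod 5 = 1" by simp
qed
lemma sq3: assumes "(p::nat) mod 3 = 1 \<or> p mod 3 = 2" shows "p^2 mod 3 = 1"
proof -
  have "p^2 mod 3 = (p mod 3)^2 mod 3" by (rule power_mod[symmetric])
  then show ?thesis using assms by auto
qed
lemma sq5: assumes "(p::nat) mod 5 = 1 \<or> p mod 5 = 4" shows "p^2 mod 5 = 1"
proof -
  have "p^2 mod 5 = (p mod 5)^2 mod 5" by (rule power_mod[symmetric])
  then show ?thesis using assms by auto
qed

lemma nt_part:
  fixes p n :: nat
  assumes pp: "prime p" and pm: "p mod 10 = 1 \<or> p mod 10 = 9"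
    and qp: "prime (p^2 * 16^n + 1)"
  shows "\<exists>y::int. [y^2 = 30] (mod int (p^2 * 16^n + 1))"
proof -
  define q where "q = p^2 * 16^n + 1"
  have qpr: "prime q" using qp q_def by simp
  have op: "odd p" using pm by presburger
  have p2: "p \<ge> 2" using prime_gt_1_nat[OF pp] by simp
  have n1: "n \<ge> 1"
  proof (rule ccontr)
    assume "\<not> n \<ge> 1" then have "n = 0" by simp
    then have "q = p^2 + 1" using q_def by simp
    moreover have "even (p^2 + 1)" using op by simp
    moreover have "p^2 \<ge> 2^2" using p2 by (rule power_mono) simp
    then have "p^2 + 1 > 2" by simp
    ultimately show False using qpr prime_odd_nat[of q] by simp
  qed
  have "(16::nat)^n = (4*4)^n" by simp
  also have "\<dots> = 4^n*4^n" by (simp only: power_mult_distrib)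
  finally have q_eq: "q = (p*4^n)^2 + 1" unfolding q_def by (simp add: power2_eq_square)
  have n3: "\<not> 3 dvd p"
  proof
    assume "3 dvd p" then have "p = 3" using pp primes_dvd_imp_eq[of 3 p] by simp
    then show False using pm by simp
  qed
  then have "p mod 3 = 1 \<or> p mod 3 = 2" by presburger
  then have q3: "q mod 3 = 2" unfolding q_def using qmod[of p 3 n] sq3 pow16 by simp
  have "p mod 5 = p mod 10 mod 5" by (simp add: mod_mod_cancel)
  then have "p mod 5 = 1 \<or> p mod 5 = 4" using pm by auto
  then have q5: "q mod 5 = 2" unfolding q_def using qmod[of p 5 n] sq5 pow16 by simp
  have "q = 1 + p * (p*16^n)" unfolding q_def by (simp add: power2_eq_square)
  then have "q mod p = 1 mod p" by (metis mod_mult_self2)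
  then have qp1: "q mod p = 1" using p2 by simp
  define h where "h = (q - 1) div 2"
  have heven: "even h"
  proof -
    obtain k where "n = Suc k" using n1 by (cases n) auto
    then have "q - 1 = 2 * (8 * p^2 * 16^k)" unfolding q_def by simp
    then show ?thesis unfolding h_def by simp
  qed
  have q64: "q > 5"
  proof -
    have a: "p^2 \<ge> 2^2" using p2 by (rule power_mono) simp
    have b: "(16::nat)^n \<ge> 16^1" using n1 by (rule power_increasing) simp
    have "p^2 * 16^n \<ge> 2^2 * 16^1" using a b by (rule mult_le_mono)
    then show ?thesis unfolding q_def by simp
  qed
  define Q where "Q = int q"
  have E: "[Legendre a Q = a^h] (mod Q)" for a
    using euler_criterion[of q a] qpr q64 unfolding Q_def h_def by simp
  have Q2: "Q > 2" using q64 Q_def by simp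
  have h3: "Legendre 3 Q = -1"
  proof -
    have "Legendre (int 3) (int q) * Legendre (int q) (int 3) = (-1::int) ^ ((3 - 1) div 2 * ((q - 1) div 2))"
      using Quadratic_Reciprocity[of 3 q] qpr q64 by simp
    also have "\<dots> = 1" using heven unfolding h_def by simp
    finally have r: "Legendre 3 Q * Legendre Q 3 = 1" unfolding Q_def by simp
    have Qm: "Q mod 3 = 2" unfolding Q_def using q3 by (metis of_nat_mod of_nat_numeral)
    have "Legendre Q 3 = -1" unfolding Legendre_def QuadRes_def cong_def
      using Qm sq_mod3 by auto
    with r show ?thesis by simp
  qed
  have h5: "Legendre 5 Q = -1"
  proof -
    have "Legendre (int 5) (int q) * Legendre (int q) (int 5) = (-1::int) ^ ((5 - 1) div 2 * ((q - 1) div 2))"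
      using Quadratic_Reciprocity[of 5 q] qpr q64 by simp
    also have "\<dots> = 1" by simp
    finally have r: "Legendre 5 Q * Legendre Q 5 = 1" unfolding Q_def by simp
    have Qm: "Q mod 5 = 2" unfolding Q_def using q5 by (metis of_nat_mod of_nat_numeral)
    have "Legendre Q 5 = -1" unfolding Legendre_def QuadRes_def cong_def
      using Qm sq_mod5 by auto
    with r show ?thesis by simp
  qed
  have p3: "2 < p" using p2 op by (cases "p = 2") auto
  have q2': "2 < q" using q64 by simp
  have "p \<le> p^2" by (simp add: power2_eq_square)
  also have "\<dots> \<le> p^2 * 16^n" by simp
  finally have pq: "p \<noteq> q" unfolding q_def by simp
  have hp: "Legendre (int p) Q = 1"
  proof -
    have "Legendre (int p) (int q) * Legendre (int q) (int p) = (-1::int) ^ ((p - 1) div 2 * ((q - 1) div 2))"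
      using Quadratic_Reciprocity[OF pp p3 qpr q2' pq] .
    also have "\<dots> = 1" using heven unfolding h_def by simp
    finally have r: "Legendre (int p) Q * Legendre Q (int p) = 1" unfolding Q_def by simp
    have Qm: "Q mod int p = 1" unfolding Q_def using qp1 by (metis of_nat_mod of_nat_1)
    have "Legendre Q (int p) = 1" unfolding Legendre_def QuadRes_def cong_def
      using Qm p2 by (auto intro!: exI[of _ 1])
    with r show ?thesis by simp
  qed
  define m where "m = int p * 4^n"
  have Qm: "Q = m^2 + 1" unfolding Q_def m_def using q_eq by simp
  have m4: "m \<ge> 4"
  proof -
    have "(4::int)^n \<ge> 4^1" using n1 by (rule power_increasing) simp
    moreover have "int p \<ge> 1" using p2 by simp
    ultimately show ?thesis unfolding m_def by (metis mult_mono mult_1 zero_le_numeral zero_le_one order_trans power_one_right)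
  qed
  have L2m: "Legendre (2*m) Q = 1"
  proof -
    have "2*m < m*m" using m4 by (intro mult_strict_right_mono) auto
    then have lt: "2*m < Q" unfolding Qm by (simp add: power2_eq_square)
    have nz: "\<not> [2*m = 0] (mod Q)" unfolding cong_def using lt m4 by simp
    have "[(1+m)^2 = 2*m] (mod Q)" unfolding cong_iff_dvd_diff Qm by (simp add: power2_eq_square algebra_simps)
    then have "QuadRes Q (2*m)" unfolding QuadRes_def by blast
    with nz show ?thesis unfolding Legendre_def by simp
  qed
  have L4: "Legendre (4^n) Q = 1"
  proof -
    have a1: "4^n \<le> m" unfolding m_def using p2 by simp
    have "m * 1 \<le> m * m" using m4 by (intro mult_left_mono) auto
    then have lt: "4^n < Q" unfolding Qm using a1 by (simp add: power2_eq_square)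
    have nz: "\<not> [4^n = 0] (mod Q)" unfolding cong_def using lt by simp
    have "((2::int)^n)^2 = (2^2)^n" by (simp only: power_mult[symmetric] mult.commute)
    then have "((2::int)^n)^2 = 4^n" by simp
    then have "[(2^n)^2 = 4^n] (mod Q)" by simp
    then have "QuadRes Q (4^n)" unfolding QuadRes_def by blast
    with nz show ?thesis unfolding Legendre_def by simp
  qed
  have c1: "[1 = 2^h * (int p)^h * (4^n)^h] (mod Q)"
    using E[of "2*m"] L2m unfolding m_def by (simp add: power_mult_distrib mult.assoc)
  have c2: "[2^h * (int p)^h * (4^n)^h = 2^h * 1 * 1] (mod Q)"
    using E[of "int p"] E[of "4^n"] L4 hp by (intro cong_mult cong_refl) (simp_all add: cong_sym)
  have c3: "[2^h = 1] (mod Q)" using cong_trans[OF c1 c2] by (simp add: cong_sym)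
  have c4: "[(30::int)^h = 2^h * 3^h * 5^h] (mod Q)" by (simp flip: power_mult_distrib)
  have c5: "[2^h * 3^h * 5^h = (1::int) * (-1) * (-1)] (mod Q)"
    using E[of 3] E[of 5] h3 h5 c3 by (intro cong_mult) (simp_all add: cong_sym)
  have "[Legendre 30 Q = 1] (mod Q)" using cong_trans[OF E[of 30] cong_trans[OF c4 c5]] by simp
  then have "Legendre 30 (int q) = 1" using leg_eq_from_cong[of 30 q 1] q64 Q_def by simp
  then have "QuadRes Q 30" unfolding Legendre_def Q_def by (simp split: if_splits)
  then show ?thesis unfolding QuadRes_def Q_def q_def by simp
qed

lemma scale_add:
  fixes s c a b :: "'a::field"
  assumes s0: "s \<noteq> 0" and sc: "s^2 = c"
  defines "f \<equiv> map_option (\<lambda>(x,y). (x, s*y))"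
  shows "f (ell_add c a b P Q) = ell_add 1 a b (f P) (f Q)"
proof (cases P)
  case None then show ?thesis by (simp add: ell_add_def f_def)
next
  case (Some P')
  obtain x1 y1 where P: "P = Some (x1,y1)" using Some by (cases P') auto
  show ?thesis
  proof (cases Q)
    case None then show ?thesis by (simp add: ell_add_def f_def P)
  next
    case (Some Q')
    obtain x2 y2 where Q: "Q = Some (x2,y2)" using Some by (cases Q') auto
    have e1: "s * y1 + s * y2 = 0 \<longleftrightarrow> y1 + y2 = 0"
      using s0 by (metis distrib_left mult_eq_0_iff)
    have l1: "(s * y2 - s * y1) / (x2 - x1) = s * ((y2 - y1) / (x2 - x1))"
      by (simp add: algebra_simps)
    have l2: "(3 * x1^2 + a) / (2 * s * y1) = s * ((3 * x1^2 + a) / (2 * c * y1))"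
    proof (cases "2 * y1 = 0")
      case True then show ?thesis by (auto simp: mult.assoc)
    next
      case False
      have "2 * c * y1 = s * (2 * s * y1)" using sc by (simp add: power2_eq_square algebra_simps)
      then show ?thesis using False s0 by (simp add: field_simps)
    qed
    have sq: "\<And>l. (s*l)^2 = c * l^2" using sc by (simp add: power_mult_distrib)
    show ?thesis
    proof (cases "x1 = x2")
      case False
      define l where "l = (y2 - y1) / (x2 - x1)"
      define x3 where "x3 = c * l^2 - x1 - x2"
      have L: "ell_add c a b P Q = Some (x3, l * (x1 - x3) - y1)"
        using False unfolding P Q ell_add_def l_def x3_def by (simp add: Let_def)
      have R0: "ell_add 1 a b (f P) (f Q) = (let l' = (s*y2 - s*y1)/(x2-x1); x3' = 1*l'^2 - x1 - x2 in Some (x3', l'*(x1-x3') - s*y1))"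
        using False unfolding P Q ell_add_def f_def by simp
      have l1': "(s*y2 - s*y1)/(x2-x1) = s*l" using l1 l_def by simp
      have R: "ell_add 1 a b (f P) (f Q) = Some (x3, (s*l) * (x1 - x3) - s*y1)"
        unfolding R0 Let_def l1' mult_1 sq x3_def by (rule refl)
      show ?thesis unfolding L R by (simp add: f_def right_diff_distrib mult.assoc)
    next
      case True
      show ?thesis
      proof (cases "y1 + y2 = 0")
        case True2: True
        have L: "ell_add c a b P Q = None" using True True2 unfolding P Q ell_add_def by simp
        have R: "ell_add 1 a b (f P) (f Q) = None" using True True2 e1 unfolding P Q ell_add_def f_def by simp
        show ?thesis unfolding L R by (simp add: f_def)
      next
        case False2: False
        define l where "l = (3 * x1^2 + a) / (2 * c * y1)"
        define x3 where "x3 = c * l^2 - 2 * x1"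
        have L: "ell_add c a b P Q = Some (x3, l * (x1 - x3) - y1)"
          using True False2 unfolding P Q ell_add_def l_def x3_def by (simp add: Let_def)
        have R0: "ell_add 1 a b (f P) (f Q) = (let l' = (3 * x1^2 + a) / (2 * 1 * (s*y1)); x3' = 1 * l'^2 - 2 * x1 in Some (x3', l'*(x1-x3') - s*y1))"
          using True False2 e1 unfolding P Q ell_add_def f_def by simp
        have l2': "(3 * x1^2 + a) / (2 * 1 * (s*y1)) = s*l" using l2 l_def by (simp add: mult.assoc)
        have R: "ell_add 1 a b (f P) (f Q) = Some (x3, (s*l) * (x1 - x3) - s*y1)"
          unfolding R0 Let_def l2' mult_1 sq x3_def by (rule refl)
        show ?thesis unfolding L R by (simp add: f_def right_diff_distrib mult.assoc)
      qed
    qed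
  qed
qed

lemma scale_iso:
  fixes s c a b :: "'a::field"
  assumes s0: "s \<noteq> 0" and sc: "s^2 = c"
  shows "ell_group c a b \<cong> ell_group 1 a b"
proof -
  define f where "f \<equiv> map_option (\<lambda>(x::'a,y::'a). (x, s*y))"
  define g where "g \<equiv> map_option (\<lambda>(x::'a,y::'a). (x, y/s))"
  have fc: "f P \<in> ell_points 1 a b" if "P \<in> ell_points c a b" for P
    using that sc unfolding f_def ell_points_def
    by (cases P) (auto simp: power_mult_distrib)
  have gc: "g P \<in> ell_points c a b" if "P \<in> ell_points 1 a b" for P
    using that sc s0 unfolding g_def ell_points_def
    by (cases P) (auto simp: power_divide)
  have fg: "f (g P) = P" for P using s0 unfolding f_def g_def by (cases P) auto
  have gf: "g (f P) = P" for P using s0 unfolding f_def g_def by (cases P) auto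
  have "bij_betw f (ell_points c a b) (ell_points 1 a b)"
    by (rule bij_betw_byWitness[where f'=g]) (use fc gc fg gf in auto)
  moreover have "f \<in> hom (ell_group c a b) (ell_group 1 a b)"
    unfolding hom_def ell_group_def using fc scale_add[OF s0 sc] f_def by auto
  ultimately have "f \<in> iso (ell_group c a b) (ell_group 1 a b)"
    unfolding iso_def ell_group_def by simp
  then show ?thesis by (rule is_isoI)
qed


theorem lemma4:
  fixes p n :: nat
  assumes "prime p"
    and "p mod 10 = 1 \<or> p mod 10 = 9"
    and "prime (p^2 * 16^n + 1)"
    and "CARD('a) = p^2 * 16^n + 1"
  shows "ell_group (30::'a::{finite,field}) (-1) 0 \<cong> ell_group (1::'a) (-1) 0"
proof -
  define q where "q = p^2 * 16^n + 1"
  obtain y :: int where y: "[y^2 = 30] (mod int q)" using nt_part[OF assms(1-3)] q_def by blast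
  have qpr: "prime q" using assms(3) q_def by simp
  have "CHAR('a) dvd q" using CHAR_dvd_CARD[where 'a='a] assms(4) q_def by simp
  then have ch: "CHAR('a) = q" using qpr CHAR_not_1'[where 'a='a]
    by (metis prime_nat_iff One_nat_def)
  have d: "int CHAR('a) dvd y^2 - 30" using y unfolding cong_iff_dvd_diff ch .
  have z: "of_int (y^2 - 30) = (0::'a)" using d of_int_eq_0_iff_char_dvd by blast
  then have "(of_int y :: 'a)^2 - 30 = 0" by simp
  then have s2: "(of_int y :: 'a)^2 = 30" by simp
  have "(30::'a) \<noteq> 0"
  proof
    assume "(30::'a) = 0"
    then have "(of_nat 30 :: 'a) = 0" by simp
    then have "q dvd 30" using ch of_nat_eq_0_iff_char_dvd by metis
    then have "q \<le> 30" by (simp add: dvd_imp_le)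
    moreover have "p \<ge> 11"
    proof (rule ccontr)
      assume "\<not> p \<ge> 11"
      then have "p = 1 \<or> p = 9" using assms(2) by presburger
      moreover have "p \<noteq> 1" using assms(1) by auto
      moreover have "p \<noteq> 9"
      proof
        assume "p = 9" then have "(3::nat) dvd p" by simp
        then have "p = 3" using assms(1) primes_dvd_imp_eq[of 3 p] by simp
        then show False using \<open>p = 9\<close> by simp
      qed
      ultimately show False by simp
    qed
    moreover have "p^2 \<le> p^2 * 16^n" by simp
    moreover have "11^2 \<le> p^2" using \<open>p \<ge> 11\<close> by (rule power_mono) simp
    then have "121 \<le> p^2" by simp
    ultimately show False unfolding q_def by linarith
  qed
  then have "(of_int y :: 'a) \<noteq> 0" using s2 by auto
  then show ?thesis using scale_iso[of "of_int y :: 'a" 30 "-1" 0] s2 by simp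
qed

end
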